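(* Let $0<\Gamma_0\le1$ and let $\tau\subset\mathbb R^m$ be a $\Gamma_0$-flake. Then for every vertex $p\in\tau$, $$D(p,\tau)<\frac{2L(\tau)^2\,\Gamma_0}{\ell(\tau)}.$$
   Context: A simplex is a nonempty finite subset $\sigma\subset\mathbb R^m$ (vertices need not be affinely independent); $\dim\sigma=|\sigma|-1$; faces are nonempty subsets. For $p\in\sigma$, $\sigma_p=\sigma\setminus\{p\}$. $L(\sigma)$ and $\ell(\sigma)$ are the largest and smallest distances between distinct vertices (both $0$ for a $0$-simplex). The altitude of $p$ in $\sigma$ is $D(p,\sigma)=d(p,\mathrm{aff}(\sigma_p))$. The thickness of a $j$-simplex is $\Upsilon(\sigma)=1$ if $j=0$ and $\min_{p\in\sigma}D(p,\sigma)/(jL(\sigma))$ otherwise. $\sigma$ is $\Gamma_0$-good if every $j$-dimensional face $\sigma^j\subseteq\sigma$ ($0\le j\le\dim\sigma$) satisfies $\Upsilon(\sigma^j)\ge\Gamma_0^j$; it is $\Gamma_0$-bad otherwise. A $\Gamma_0$-flake is a $\Gamma_0$-bad simplex all of whose proper faces are $\Gamma_0$-good. *)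

theory Defs
  imports "HOL-Analysis.Analysis"
begin

text \<open>A simplex is a nonempty finite set of points (vertices need not be affinely independent).
  Points live in an arbitrary Euclidean space (R^m).\<close>

definition is_simplex :: "'a::euclidean_space set \<Rightarrow> bool" where
  "is_simplex \<sigma> \<longleftrightarrow> finite \<sigma> \<and> \<sigma> \<noteq> {}"

definition sdim :: "'a::euclidean_space set \<Rightarrow> nat" where
  "sdim \<sigma> = card \<sigma> - 1"

definition Lmax :: "'a::euclidean_space set \<Rightarrow> real" where
  "Lmax \<sigma> = (if card \<sigma> \<le> 1 then 0
     else Max {dist p q | p q. p \<in> \<sigma> \<and> q \<in> \<sigma> \<and> p \<noteq> q})"

definition lmin :: "'a::euclidean_space set \<Rightarrow> real" where
  "lmin \<sigma> = (if card \<sigma> \<le> 1 then 0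
     else Min {dist p q | p q. p \<in> \<sigma> \<and> q \<in> \<sigma> \<and> p \<noteq> q})"

definition altitude :: "'a::euclidean_space \<Rightarrow> 'a set \<Rightarrow> real" where
  "altitude p \<sigma> = infdist p (affine hull (\<sigma> - {p}))"

definition thickness :: "'a::euclidean_space set \<Rightarrow> real" where
  "thickness \<sigma> = (if sdim \<sigma> = 0 then 1
     else Min ((\<lambda>p. altitude p \<sigma>) ` \<sigma>) / (real (sdim \<sigma>) * Lmax \<sigma>))"

definition good :: "real \<Rightarrow> 'a::euclidean_space set \<Rightarrow> bool" where
  "good \<Gamma>\<^sub>0 \<sigma> \<longleftrightarrow> (\<forall>\<tau>. \<tau> \<subseteq> \<sigma> \<and> \<tau> \<noteq> {} \<longrightarrow> thickness \<tau> \<ge> \<Gamma>\<^sub>0 ^ sdim \<tau>)"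

definition flake :: "real \<Rightarrow> 'a::euclidean_space set \<Rightarrow> bool" where
  "flake \<Gamma>\<^sub>0 \<sigma> \<longleftrightarrow> is_simplex \<sigma> \<and> \<not> good \<Gamma>\<^sub>0 \<sigma> \<and>
     (\<forall>\<tau>. \<tau> \<subset> \<sigma> \<and> \<tau> \<noteq> {} \<longrightarrow> good \<Gamma>\<^sub>0 \<tau>)"

end

theory Submission
  imports Defs
begin


lemma key_ineq:
  fixes u v :: "'a::euclidean_space"
  assumes "v \<noteq> 0"
  shows "norm (u - ((inner u v) / (inner v v)) *\<^sub>R v) * norm v \<le> norm (v - s *\<^sub>R u) * norm u"
proof -
  define A where "A = inner u u"
  define Bv where "Bv = inner v v"
  define C where "C = inner u v"
  have Bv: "Bv > 0" using assms by (simp add: Bv_def)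
  have l: "(norm (u - (C / Bv) *\<^sub>R v) * norm v)^2 = A * Bv - C^2"
    unfolding power_mult_distrib power2_norm_eq_inner using Bv
    by (simp add: A_def Bv_def C_def inner_diff_left inner_diff_right inner_commute field_simps power2_eq_square)
  have r: "(norm (v - s *\<^sub>R u) * norm u)^2 = A * Bv - C^2 + (s * A - C)^2"
    unfolding power_mult_distrib power2_norm_eq_inner
    by (simp add: A_def Bv_def C_def inner_diff_left inner_diff_right inner_commute algebra_simps power2_eq_square)
  have "(norm (u - (C / Bv) *\<^sub>R v) * norm v)^2 \<le> (norm (v - s *\<^sub>R u) * norm u)^2"
    unfolding l r by simp
  then show ?thesis unfolding C_def Bv_def
    by (rule power2_le_imp_le) simp
qed

lemma core:
  fixes a p q :: "'a::euclidean_space"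
  assumes aB: "a \<in> B" and pB: "p \<notin> B" and qB: "q \<notin> B"
  shows "infdist p (affine hull (insert q B)) * infdist q (affine hull B)
     \<le> infdist q (affine hull (insert p B)) * dist p a"
proof -
  define B0 where "B0 = (\<lambda>x. -a + x) ` (B - {a})"
  have hB: "affine hull B = (\<lambda>x. a+x) ` span B0"
    using affine_hull_span2[OF aB] B0_def by simp
  have hq: "affine hull (insert q B) = (\<lambda>x. a+x) ` span (insert (q - a) B0)"
  proof -
    have "insert q B - {a} = insert q (B - {a})" using aB qB by auto
    then show ?thesis using affine_hull_span2[of a "insert q B"] aB B0_def by simp
  qed
  have hp: "affine hull (insert p B) = (\<lambda>x. a+x) ` span (insert (p - a) B0)"
  proof -
    have "insert p B - {a} = insert p (B - {a})" using aB pB by auto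
    then show ?thesis using affine_hull_span2[of a "insert p B"] aB B0_def by simp
  qed
  obtain wp u where wp: "wp \<in> span B0" and u: "\<And>w. w \<in> span B0 \<Longrightarrow> orthogonal u w"
    and pdec: "p - a = wp + u"
    using orthogonal_subspace_decomp_exists[of B0 "p - a"] by blast
  obtain wq v where wq: "wq \<in> span B0" and v: "\<And>w. w \<in> span B0 \<Longrightarrow> orthogonal v w"
    and qdec: "q - a = wq + v"
    using orthogonal_subspace_decomp_exists[of B0 "q - a"] by blast
  have Dqv: "infdist q (affine hull B) \<le> norm v"
  proof -
    have "a + wq \<in> affine hull B" using hB wq by simp
    moreover have "dist q (a + wq) = norm v" using qdec
      by (simp add: dist_norm algebra_simps)
    ultimately show ?thesis by (metis infdist_le)
  qed
  have nu: "norm u \<le> dist p a"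
  proof -
    have "inner u wp = 0" using u[OF wp] by (simp add: orthogonal_def)
    then have "(norm (p - a))^2 = (norm wp)^2 + (norm u)^2"
      using pdec by (simp add: power2_norm_eq_inner inner_add_left inner_add_right inner_commute)
    then have h: "(norm u)^2 \<le> (norm (p - a))^2" by simp
    show ?thesis using power2_le_imp_le[OF h] by (simp add: dist_norm)
  qed
  have main: "infdist p (affine hull (insert q B)) * norm v \<le> infdist q (affine hull (insert p B)) * norm u"
  proof (cases "v = 0")
    case True
    then show ?thesis by (simp add: infdist_nonneg)
  next
    case False
    define t where "t = inner u v / inner v v"
    define x where "x = a + (wp - t *\<^sub>R wq + t *\<^sub>R (q - a))"
    have "wp - t *\<^sub>R wq + t *\<^sub>R (q - a) \<in> span (insert (q - a) B0)"
      using wp wq by (meson span_add span_diff span_mul span_base insertI1 span_mono subset_insertI subsetD)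
    then have xin: "x \<in> affine hull (insert q B)" using hq x_def by simp
    have "p - x = u - t *\<^sub>R v" using pdec qdec x_def by (simp add: algebra_simps)
    then have "infdist p (affine hull (insert q B)) \<le> norm (u - t *\<^sub>R v)"
      using infdist_le[OF xin, of p] by (simp add: dist_norm)
    then have L: "infdist p (affine hull (insert q B)) * norm v \<le> norm (u - t *\<^sub>R v) * norm v"
      by (simp add: mult_right_mono)
    show ?thesis
    proof (cases "u = 0")
      case True
      then have "norm (u - t *\<^sub>R v) = 0" by (simp add: t_def)
      then have "infdist p (affine hull (insert q B)) * norm v \<le> 0" using L by simp
      moreover have "0 \<le> infdist q (affine hull (insert p B)) * norm u" by (simp add: infdist_nonneg)
      ultimately show ?thesis by linarith
    next
      case unz: False
      have lb: "norm (u - t *\<^sub>R v) * norm v / norm u \<le> dist q y" if y: "y \<in> affine hull (insert p B)" for y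
      proof -
        obtain z where z: "z \<in> span (insert (p - a) B0)" and yz: "y = a + z" using y hp by auto
        obtain s where s: "z - s *\<^sub>R (p - a) \<in> span B0" using z span_breakdown_eq by blast
        define w where "w = z - s *\<^sub>R (p - a)"
        have "q - y = (v - s *\<^sub>R u) + (wq - w - s *\<^sub>R wp)"
          using yz qdec pdec w_def by (simp add: algebra_simps)
        moreover have "wq - w - s *\<^sub>R wp \<in> span B0" using wq wp s w_def
          by (simp add: span_diff span_mul)
        ultimately have eq: "q - y = (v - s *\<^sub>R u) + (wq - w - s *\<^sub>R wp)" and
          ort: "inner (v - s *\<^sub>R u) (wq - w - s *\<^sub>R wp) = 0"
          using u v by (auto simp: orthogonal_def inner_diff_left)
        have "(norm (q - y))^2 = (norm (v - s *\<^sub>R u))^2 + (norm (wq - w - s *\<^sub>R wp))^2"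
          unfolding eq using ort by (simp add: power2_norm_eq_inner inner_add_left inner_add_right inner_commute)
        then have h2: "(norm (v - s *\<^sub>R u))^2 \<le> (norm (q - y))^2" by simp
        have "norm (v - s *\<^sub>R u) \<le> norm (q - y)" using power2_le_imp_le[OF h2] by simp
        moreover have "norm (u - t *\<^sub>R v) * norm v \<le> norm (v - s *\<^sub>R u) * norm u"
          using key_ineq[OF False] t_def by simp
        ultimately show ?thesis using unz
          by (simp add: divide_le_eq dist_norm) (smt (verit) mult_right_mono norm_ge_zero)
      qed
      have ne: "affine hull (insert p B) \<noteq> {}" by simp
      have "norm (u - t *\<^sub>R v) * norm v / norm u \<le> infdist q (affine hull (insert p B))"
        unfolding infdist_notempty[OF ne] by (rule cINF_greatest[OF ne lb])
      then have "norm (u - t *\<^sub>R v) * norm v \<le> infdist q (affine hull (insert p B)) * norm u"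
        using unz by (simp add: divide_le_eq)
      then show ?thesis using L by linarith
    qed
  qed
  have "infdist p (affine hull (insert q B)) * infdist q (affine hull B)
      \<le> infdist p (affine hull (insert q B)) * norm v"
    using Dqv by (simp add: infdist_nonneg mult_left_mono)
  also have "\<dots> \<le> infdist q (affine hull (insert p B)) * norm u" by (rule main)
  also have "\<dots> \<le> infdist q (affine hull (insert p B)) * dist p a"
    using nu by (simp add: infdist_nonneg mult_left_mono)
  finally show ?thesis .
qed



lemma fin_dists: "finite \<sigma> \<Longrightarrow> finite {dist p q |p q. p \<in> \<sigma> \<and> q \<in> \<sigma> \<and> p \<noteq> q}"
  by (rule finite_subset[of _ "(\<lambda>(p,q). dist p q) ` (\<sigma> \<times> \<sigma>)"]) auto

lemma card_ge2: "finite \<sigma> \<Longrightarrow> x \<in> \<sigma> \<Longrightarrow> y \<in> \<sigma> \<Longrightarrow> x \<noteq> y \<Longrightarrow> card \<sigma> \<ge> 2"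
  by (metis card_2_iff card_mono empty_subsetI insert_subset)

lemma Lmax_ge:
  assumes "finite \<sigma>" "x \<in> \<sigma>" "y \<in> \<sigma>" "x \<noteq> y"
  shows "dist x y \<le> Lmax \<sigma>"
proof -
  have "card \<sigma> \<ge> 2" using card_ge2[OF assms] .
  moreover have "dist x y \<in> {dist p q |p q. p \<in> \<sigma> \<and> q \<in> \<sigma> \<and> p \<noteq> q}" using assms by blast
  ultimately show ?thesis unfolding Lmax_def using Max_ge[OF fin_dists[OF assms(1)]] by simp
qed

lemma lmin_le:
  assumes "finite \<sigma>" "x \<in> \<sigma>" "y \<in> \<sigma>" "x \<noteq> y"
  shows "lmin \<sigma> \<le> dist x y"
proof -
  have "card \<sigma> \<ge> 2" using card_ge2[OF assms] .
  moreover have "dist x y \<in> {dist p q |p q. p \<in> \<sigma> \<and> q \<in> \<sigma> \<and> p \<noteq> q}" using assms by blast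
  ultimately show ?thesis unfolding lmin_def using Min_le[OF fin_dists[OF assms(1)]] by simp
qed

lemma lmin_pos:
  assumes "finite \<sigma>" "x \<in> \<sigma>" "y \<in> \<sigma>" "x \<noteq> y"
  shows "lmin \<sigma> > 0"
proof -
  have c: "card \<sigma> \<ge> 2" using card_ge2[OF assms] .
  let ?S = "{dist p q |p q. p \<in> \<sigma> \<and> q \<in> \<sigma> \<and> p \<noteq> q}"
  have ne: "?S \<noteq> {}" using assms by blast
  have "Min ?S \<in> ?S" using Min_in[OF fin_dists[OF assms(1)] ne] .
  then have "Min ?S > 0" by auto
  then show ?thesis unfolding lmin_def using c by simp
qed

lemma thick_small:
  assumes "finite \<sigma>" "\<sigma> \<noteq> {}" "card \<sigma> \<le> 2"
  shows "thickness \<sigma> = 1"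
proof (cases "card \<sigma> = 2")
  case False
  then have "sdim \<sigma> = 0" using assms by (simp add: sdim_def)
  then show ?thesis by (simp add: thickness_def)
next
  case True
  then obtain a b where ab: "\<sigma> = {a, b}" "a \<noteq> b" by (meson card_2_iff)
  have sd: "sdim \<sigma> = 1" using True by (simp add: sdim_def)
  have "{dist p q |p q. p \<in> \<sigma> \<and> q \<in> \<sigma> \<and> p \<noteq> q} = {dist a b}"
    using ab by (auto simp: dist_commute)
  then have L: "Lmax \<sigma> = dist a b" using True by (simp add: Lmax_def)
  have "altitude a \<sigma> = dist a b" using ab by (simp add: altitude_def insert_Diff_if)
  moreover have "altitude b \<sigma> = dist a b" using ab by (simp add: altitude_def insert_Diff_if dist_commute)
  ultimately have im: "(\<lambda>p. altitude p \<sigma>) ` \<sigma> = {dist a b}" using ab by auto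
  have pos: "dist a b > 0" using ab by simp
  show ?thesis unfolding thickness_def sd L im using pos by simp
qed

theorem mainTheorem5:
  fixes \<tau> :: "'a::euclidean_space set" and \<Gamma>\<^sub>0 :: real and p :: 'a
  assumes "0 < \<Gamma>\<^sub>0" and "\<Gamma>\<^sub>0 \<le> 1"
    and "flake \<Gamma>\<^sub>0 \<tau>"
    and "p \<in> \<tau>"
  shows "altitude p \<tau> < 2 * (Lmax \<tau>)\<^sup>2 * \<Gamma>\<^sub>0 / lmin \<tau>"
proof -
  have fin: "finite \<tau>" and ne: "\<tau> \<noteq> {}" and ngood: "\<not> good \<Gamma>\<^sub>0 \<tau>"
    and pgood: "\<And>\<sigma>. \<sigma> \<subset> \<tau> \<Longrightarrow> \<sigma> \<noteq> {} \<Longrightarrow> good \<Gamma>\<^sub>0 \<sigma>"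
    using assms(3) by (auto simp: flake_def is_simplex_def)
  obtain \<tau>' where t': "\<tau>' \<subseteq> \<tau>" "\<tau>' \<noteq> {}" "thickness \<tau>' < \<Gamma>\<^sub>0 ^ sdim \<tau>'"
    using ngood unfolding good_def by (auto simp: not_le)
  have tt: "\<tau>' = \<tau>"
  proof (rule ccontr)
    assume "\<tau>' \<noteq> \<tau>"
    then have "good \<Gamma>\<^sub>0 \<tau>'" using pgood t' by blast
    then show False using t' unfolding good_def by (meson order_refl not_le)
  qed
  have thin: "thickness \<tau> < \<Gamma>\<^sub>0 ^ sdim \<tau>" using t' tt by simp
  have c3: "card \<tau> \<ge> 3"
  proof (rule ccontr)
    assume "\<not> card \<tau> \<ge> 3"
    then have "thickness \<tau> = 1" using thick_small[OF fin ne] by simp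
    moreover have "\<Gamma>\<^sub>0 ^ sdim \<tau> \<le> 1" using assms(1,2) by (simp add: power_le_one)
    ultimately show False using thin by simp
  qed
  define j where "j = sdim \<tau>"
  have j2: "j \<ge> 2" using c3 by (simp add: j_def sdim_def)
  define L where "L = Lmax \<tau>"
  define l where "l = lmin \<tau>"
  obtain x where x: "x \<in> \<tau>" using ne by blast
  have "card (\<tau> - {x}) = card \<tau> - 1" using x fin by simp
  then have cd: "card (\<tau> - {x}) \<ge> 2" using c3 by simp
  have "\<tau> - {x} \<noteq> {}" using cd by (metis card.empty not_numeral_le_zero)
  then obtain y where "y \<in> \<tau> - {x}" by blast
  then have xy: "x \<in> \<tau>" "y \<in> \<tau>" "x \<noteq> y" using x by auto
  have lpos: "l > 0" using lmin_pos[OF fin xy] l_def by simp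
  have lL: "l \<le> L" using lmin_le[OF fin xy] Lmax_ge[OF fin xy] l_def L_def by simp
  have Lpos: "L > 0" using lpos lL by simp
  let ?A = "(\<lambda>r. altitude r \<tau>) ` \<tau>"
  have finA: "finite ?A" using fin by simp
  have neA: "?A \<noteq> {}" using ne by simp
  obtain q where q: "q \<in> \<tau>" "altitude q \<tau> = Min ?A" using Min_in[OF finA neA] by auto
  have qmin: "\<And>r. r \<in> \<tau> \<Longrightarrow> altitude q \<tau> \<le> altitude r \<tau>" using q finA by simp
  have "thickness \<tau> = altitude q \<tau> / (real j * L)"
    using j2 q by (simp add: thickness_def j_def L_def)
  then have Dq: "altitude q \<tau> < real j * \<Gamma>\<^sub>0 ^ j * L"
    using thin j2 Lpos by (simp add: j_def divide_less_eq mult.commute mult.left_commute)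
  have gen: "altitude r \<tau> < 2 * L\<^sup>2 * \<Gamma>\<^sub>0 / l" if r: "r \<in> \<tau>" "r \<noteq> q" for r
  proof -
    define B where "B = \<tau> - {r, q}"
    have "card B = card \<tau> - 2" using r q fin by (simp add: B_def card_Diff_subset)
    then have "B \<noteq> {}" using c3 by auto
    then obtain a where aB: "a \<in> B" by blast
    have e1: "\<tau> - {r} = insert q B" using r q by (auto simp: B_def)
    have e2: "\<tau> - {q} = insert r B" using r q by (auto simp: B_def)
    have core': "altitude r \<tau> * infdist q (affine hull B) \<le> altitude q \<tau> * dist r a"
      using core[of a B r q] aB unfolding altitude_def e1 e2 by (simp add: B_def)
    have "dist r a \<le> L" using Lmax_ge[OF fin r(1), of a] aB L_def by (auto simp: B_def)
    then have "altitude q \<tau> * dist r a \<le> altitude q \<tau> * L"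
      by (intro mult_left_mono) (simp_all add: altitude_def infdist_nonneg)
    then have step1: "altitude r \<tau> * infdist q (affine hull B) \<le> altitude q \<tau> * L"
      using core' by linarith
    define \<sigma> where "\<sigma> = \<tau> - {r}"
    have sub: "\<sigma> \<subset> \<tau>" "\<sigma> \<noteq> {}" using r q by (auto simp: \<sigma>_def)
    have "good \<Gamma>\<^sub>0 \<sigma>" using pgood sub by blast
    then have thg: "thickness \<sigma> \<ge> \<Gamma>\<^sub>0 ^ sdim \<sigma>" using sub unfolding good_def by blast
    have finS: "finite \<sigma>" using fin by (simp add: \<sigma>_def)
    have sds: "sdim \<sigma> = j - 1" using r fin by (simp add: \<sigma>_def sdim_def j_def)
    have qS: "q \<in> \<sigma>" "a \<in> \<sigma>" "q \<noteq> a" using r q aB by (auto simp: \<sigma>_def B_def)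
    have LS: "l \<le> Lmax \<sigma>"
    proof -
      have "l \<le> dist q a" using lmin_le[OF fin q(1), of a] aB l_def by (auto simp: B_def)
      also have "\<dots> \<le> Lmax \<sigma>" using Lmax_ge[OF finS qS] .
      finally show ?thesis .
    qed
    have LSpos: "Lmax \<sigma> > 0" using LS lpos by simp
    let ?AS = "(\<lambda>r. altitude r \<sigma>) ` \<sigma>"
    have "Min ?AS \<le> altitude q \<sigma>" using finS qS by simp
    moreover have "thickness \<sigma> = Min ?AS / (real (j - 1) * Lmax \<sigma>)"
      using sds j2 by (simp add: thickness_def)
    moreover have "Min ?AS / (real (j - 1) * Lmax \<sigma>) \<le> altitude q \<sigma> / (real (j - 1) * Lmax \<sigma>)"
      using \<open>Min ?AS \<le> altitude q \<sigma>\<close> LSpos by (intro divide_right_mono) simp_all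
    ultimately have "\<Gamma>\<^sub>0 ^ (j - 1) \<le> altitude q \<sigma> / (real (j - 1) * Lmax \<sigma>)"
      using thg sds by simp
    then have "\<Gamma>\<^sub>0 ^ (j - 1) * (real (j - 1) * Lmax \<sigma>) \<le> altitude q \<sigma>"
      using j2 LSpos by (simp add: le_divide_eq)
    moreover have "altitude q \<sigma> = infdist q (affine hull B)"
      unfolding altitude_def \<sigma>_def B_def by (metis Diff_insert2 insert_commute)
    moreover have "\<Gamma>\<^sub>0 ^ (j - 1) * (real (j - 1) * l) \<le> \<Gamma>\<^sub>0 ^ (j - 1) * (real (j - 1) * Lmax \<sigma>)"
      using LS assms(1) by (simp add: mult_left_mono)
    ultimately have DqS: "\<Gamma>\<^sub>0 ^ (j - 1) * (real (j - 1) * l) \<le> infdist q (affine hull B)" by linarith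
    define X where "X = altitude r \<tau>"
    define c where "c = \<Gamma>\<^sub>0 ^ (j - 1)"
    have cpos: "c > 0" using assms(1) by (simp add: c_def)
    have jj: "j = Suc (j - 1)" using j2 by simp
    have gj: "\<Gamma>\<^sub>0 ^ j = \<Gamma>\<^sub>0 * c" unfolding c_def by (subst jj) simp
    have X0: "X \<ge> 0" by (simp add: X_def altitude_def infdist_nonneg)
    have "X * (c * (real (j - 1) * l)) \<le> X * infdist q (affine hull B)"
      using DqS X0 c_def by (simp add: mult_left_mono)
    also have "\<dots> \<le> altitude q \<tau> * L" using step1 X_def by simp
    also have "\<dots> < real j * (\<Gamma>\<^sub>0 * c) * L * L" using Dq Lpos gj by simp
    finally have "c * (X * (real (j - 1) * l)) < c * (real j * \<Gamma>\<^sub>0 * L\<^sup>2)"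
      by (simp add: algebra_simps power2_eq_square)
    then have h1: "X * (real (j - 1) * l) < real j * \<Gamma>\<^sub>0 * L\<^sup>2" using cpos by simp
    have rj: "real j \<le> 2 * real (j - 1)" using j2 by linarith
    have "real j * \<Gamma>\<^sub>0 * L\<^sup>2 \<le> 2 * real (j - 1) * \<Gamma>\<^sub>0 * L\<^sup>2"
      using rj assms(1) by (simp add: mult_right_mono)
    moreover have e1: "real (j - 1) * (X * l) = X * (real (j - 1) * l)" by (simp add: mult_ac)
    moreover have e2: "real (j - 1) * (2 * L\<^sup>2 * \<Gamma>\<^sub>0) = 2 * real (j - 1) * \<Gamma>\<^sub>0 * L\<^sup>2" by (simp add: mult_ac)
    ultimately have "real (j - 1) * (X * l) < real (j - 1) * (2 * L\<^sup>2 * \<Gamma>\<^sub>0)"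
      using h1 by linarith
    moreover have "real (j - 1) > 0" using j2 by simp
    ultimately have "X * l < 2 * L\<^sup>2 * \<Gamma>\<^sub>0" by simp
    then show ?thesis using lpos X_def by (simp add: less_divide_eq)
  qed
  show ?thesis
  proof (cases "p = q")
    case False
    show ?thesis using gen[OF assms(4) False] unfolding L_def l_def by simp
  next
    case True
    obtain r where r1: "r \<in> \<tau>" and r2: "r \<noteq> q" using xy by blast
    have h: "altitude r \<tau> < 2 * L\<^sup>2 * \<Gamma>\<^sub>0 / l" using gen[OF r1 r2] .
    show ?thesis using qmin[OF r1] h unfolding True L_def l_def by linarith
  qed
qed

end
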